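(* Let $Q\in\mathbb{N}$, $\mathcal{S}\subseteq B(0,Q^{1/2})\cap(\mathbb{Z}[i]\setminus\{0\})$, $\Delta>0$, $\tau=\Delta^{-1/4}$. Let $b,r\in\mathbb{Z}[i]$ with $(b,r)=1$ and $0<|r|\le\tau$, and let $z\in\mathbb{C}$ with $\Delta^{1/2}\le|z|<\frac{2}{|r|\tau}$. Let $\delta>0$ satisfy $$\frac{\sqrt{Q}\,\Delta^{1/2}}{|z|}\le\delta^{1/2}\le\sqrt{Q}.$$ For $\mu\in\mathbb{C}$, $\nu\ge0$ let $J(\mu,\nu)=B(rz\mu,2|rz|\nu)$, and for $y\in\mathbb{C}$ let $$\Pi(y,\delta)=\sum_{q\in\mathcal{S}\cap B(y,\delta^{1/2})}\ \Big|\big\{m\in\mathbb{Z}[i]\cap J(y,\delta^{1/2}):\ m\equiv -bq\bmod r,\ m\ne0\big\}\Big|.$$ Then $$P\Big(\frac{b}{r}+z\Big)\le 16+\frac{4}{\pi\delta}\int_{B(0,\sqrt{Q})}\Pi(y,\delta)\,dy,$$ where $dy$ is Lebesgue measure on $\mathbb{C}\cong\mathbb{R}^2$.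
   Context: $\mathbb{Z}[i]$ are the Gaussian integers; $B(y,u)=\{w\in\mathbb{C}:|w-y|\le u\}$. For $\alpha\in\mathbb{C}$, $$P(\alpha)=\Big|\Big\{(a,q)\in\mathbb{Z}[i]\times\mathcal{S}:\ (a,q)=1,\ \Big|\frac{a}{q}-\alpha\Big|\le\Delta^{1/2}\Big\}\Big|.$$ *)

theory Defs
  imports "HOL-Analysis.Analysis"
begin

definition gauss_ints :: "complex set" where
  "gauss_ints = {z. Re z \<in> \<int> \<and> Im z \<in> \<int>}"

definition gdvd :: "complex \<Rightarrow> complex \<Rightarrow> bool" where
  "gdvd a b \<longleftrightarrow> (\<exists>c\<in>gauss_ints. b = a * c)"

definition gcoprime :: "complex \<Rightarrow> complex \<Rightarrow> bool" where
  "gcoprime a b \<longleftrightarrow> (\<forall>d\<in>gauss_ints. gdvd d a \<and> gdvd d b \<longrightarrow> gdvd d 1)"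

definition gcong :: "complex \<Rightarrow> complex \<Rightarrow> complex \<Rightarrow> bool" where
  "gcong m n r \<longleftrightarrow> gdvd r (m - n)"

definition Pcount :: "complex set \<Rightarrow> real \<Rightarrow> complex \<Rightarrow> nat" where
  "Pcount S \<Delta> \<alpha> = card {(a, q). a \<in> gauss_ints \<and> q \<in> S \<and> gcoprime a q \<and>
       cmod (a / q - \<alpha>) \<le> sqrt \<Delta>}"

definition Jball :: "complex \<Rightarrow> complex \<Rightarrow> complex \<Rightarrow> real \<Rightarrow> complex set" where
  "Jball r z \<mu> \<nu> = cball (r * z * \<mu>) (2 * cmod (r * z) * \<nu>)"

definition Pisum :: "complex set \<Rightarrow> complex \<Rightarrow> complex \<Rightarrow> complex \<Rightarrow> complex \<Rightarrow> real \<Rightarrow> nat" where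
  "Pisum S b r z y \<delta> = (\<Sum>q\<in>S \<inter> cball y (sqrt \<delta>).
      card {m \<in> gauss_ints \<inter> Jball r z y (sqrt \<delta>). gcong m (- b * q) r \<and> m \<noteq> 0})"

end

theory Submission
  imports Defs "HOL-Analysis.Analysis"
begin

lemma G_iff: "z \<in> gauss_ints \<longleftrightarrow> Re z \<in> \<int> \<and> Im z \<in> \<int>"
  by (simp add: gauss_ints_def)

lemma G_diff: "a \<in> gauss_ints \<Longrightarrow> b \<in> gauss_ints \<Longrightarrow> a - b \<in> gauss_ints"
  by (simp add: G_iff Ints_diff)
lemma G_add: "a \<in> gauss_ints \<Longrightarrow> b \<in> gauss_ints \<Longrightarrow> a + b \<in> gauss_ints"
  by (simp add: G_iff Ints_add)
lemma G_mult: "a \<in> gauss_ints \<Longrightarrow> b \<in> gauss_ints \<Longrightarrow> a * b \<in> gauss_ints"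
  by (simp add: G_iff Ints_diff Ints_add Ints_mult)
lemma G_minus: "a \<in> gauss_ints \<Longrightarrow> - a \<in> gauss_ints"
  by (simp add: G_iff)

lemma finite_G_cball: "finite (gauss_ints \<inter> cball c R)"
proof -
  define N where "N = \<lceil>cmod c + R\<rceil>"
  have "gauss_ints \<inter> cball c R \<subseteq> (\<lambda>(x,y). Complex (of_int x) (of_int y)) ` ({-N..N} \<times> {-N..N})"
  proof
    fix w assume w: "w \<in> gauss_ints \<inter> cball c R"
    then obtain x y where xy: "Re w = of_int x" "Im w = of_int y"
      by (auto simp: G_iff elim!: Ints_cases)
    have n: "cmod w \<le> cmod c + R" using w norm_triangle_ineq2[of w c]
      by (auto simp: dist_norm norm_minus_commute)
    have "\<bar>Re w\<bar> \<le> cmod c + R" "\<bar>Im w\<bar> \<le> cmod c + R"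
      using abs_Re_le_cmod[of w] abs_Im_le_cmod[of w] n by linarith+
    hence "real_of_int \<bar>x\<bar> \<le> cmod c + R" "real_of_int \<bar>y\<bar> \<le> cmod c + R" using xy by simp_all
    hence "\<bar>x\<bar> \<le> N" "\<bar>y\<bar> \<le> N" unfolding N_def
      by (metis ceiling_mono ceiling_of_int)+
    hence "(x,y) \<in> {-N..N} \<times> {-N..N}" by auto
    moreover have "w = Complex (of_int x) (of_int y)" using xy by (simp add: complex_eq_iff)
    ultimately show "w \<in> (\<lambda>(x,y). Complex (of_int x) (of_int y)) ` ({-N..N} \<times> {-N..N})"
      by force
  qed
  thus ?thesis by (rule finite_subset) auto
qed

lemma G_unit:
  assumes k: "k \<in> gauss_ints" and c: "c \<in> gauss_ints" and kc: "k * c = 1"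
  shows "k \<in> set [1, -1, \<i>, -\<i>]"
proof -
  obtain x y where xy: "Re k = of_int x" "Im k = of_int y" using k by (auto simp: G_iff elim!: Ints_cases)
  obtain u v where uv: "Re c = of_int u" "Im c = of_int v" using c by (auto simp: G_iff elim!: Ints_cases)
  have "(cmod k)^2 * (cmod c)^2 = 1" using kc by (metis norm_mult norm_one power_mult_distrib one_power2)
  hence "(Re k ^2 + Im k^2) * (Re c^2 + Im c^2) = 1" by (simp add: cmod_power2)
  hence "real_of_int ((x^2+y^2)*(u^2+v^2)) = 1" using xy uv by simp
  hence "(x^2+y^2)*(u^2+v^2) = 1" by linarith
  hence e: "x^2+y^2 = 1"
  proof -
    assume h: "(x^2+y^2)*(u^2+v^2) = 1"
    define A where "A = x^2+y^2"
    define B where "B = u^2+v^2"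
    have AB: "A*B = 1" "A \<ge> 0" "B \<ge> 0" using h by (simp_all add: A_def B_def)
    have "A \<noteq> 0" "B \<noteq> 0" using AB by auto
    hence "A \<ge> 1" "B \<ge> 1" using AB by auto
    hence "A * 1 \<le> A * B" using AB by (intro mult_left_mono) auto
    thus ?thesis using AB \<open>A \<ge> 1\<close> unfolding A_def by simp
  qed
  have "x^2 \<le> 1" "y^2 \<le> 1" using e by (smt (verit) zero_le_power2)+
  hence "\<bar>x\<bar> \<le> 1" "\<bar>y\<bar> \<le> 1" by (metis abs_le_square_iff abs_one one_power2)+
  hence "x \<in> {-1,0,1}" "y \<in> {-1,0,1}" by auto
  with e have "(x,y) \<in> {(1,0),(-1,0),(0,1),(0,-1)}" by auto
  thus ?thesis using xy by (auto simp: complex_eq_iff)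
qed

lemma card_T0:
  assumes A: "A \<subseteq> {(a,q). a \<in> gauss_ints \<and> q \<in> gauss_ints \<and> q \<noteq> 0 \<and> gcoprime a q \<and> a = q * w}"
  shows "card A \<le> 4"
proof (cases "A = {}")
  case True thus ?thesis by simp
next
  case False
  define L where "L = {x \<in> gauss_ints. x * w \<in> gauss_ints}"
  from False A obtain a1 q1 where "q1 \<in> L" "q1 \<noteq> 0" unfolding L_def by blast
  define m :: "complex \<Rightarrow> nat" where "m x = nat \<lfloor>(cmod x)^2\<rfloor>" for x
  obtain q0 where q0: "q0 \<in> L" "q0 \<noteq> 0" and q0min: "\<And>y. y \<in> L \<Longrightarrow> y \<noteq> 0 \<Longrightarrow> m q0 \<le> m y"
    using ex_has_least_nat[of "\<lambda>x. x \<in> L \<and> x \<noteq> 0" q1 m] \<open>q1 \<in> L\<close> \<open>q1 \<noteq> 0\<close> by blast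
  have msq: "real (m x) = (cmod x)^2" if "x \<in> gauss_ints" for x
  proof -
    from that have "(cmod x)^2 \<in> \<int>" by (simp add: cmod_power2 G_iff Ints_add Ints_power)
    thus ?thesis unfolding m_def by (metis Ints_cases floor_of_int of_nat_nat zero_le_floor zero_le_power2 of_int_of_nat_eq)
  qed
  have q0minc: "cmod q0 \<le> cmod y" if "y \<in> L" "y \<noteq> 0" for y
  proof -
    have "real (m q0) \<le> real (m y)" using q0min[OF that] by simp
    moreover have "q0 \<in> gauss_ints" "y \<in> gauss_ints" using q0(1) that(1) unfolding L_def by auto
    ultimately have "(cmod q0)^2 \<le> (cmod y)^2" using msq by metis
    thus ?thesis by (rule power2_le_imp_le) simp
  qed
  have q0w: "q0 * w \<in> gauss_ints" "q0 \<in> gauss_ints" using q0 unfolding L_def by auto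
  have key: "\<exists>k\<in>set [1, -1, \<i>, -\<i>]. p = (k * (q0 * w), k * q0)" if p: "p \<in> A" for p
  proof -
    obtain a q where pq: "p = (a,q)" by fastforce
    with p A have a: "a \<in> gauss_ints" and q: "q \<in> gauss_ints" "q \<noteq> 0" and cop: "gcoprime a q"
      and aq: "a = q * w" by auto
    define t where "t = q / q0"
    define k0 where "k0 = Complex (of_int (round (Re t))) (of_int (round (Im t)))"
    have k0G: "k0 \<in> gauss_ints" by (simp add: k0_def G_iff)
    define x where "x = q - k0 * q0"
    have xL: "x \<in> L" unfolding L_def x_def
      using G_diff G_mult k0G q q0w aq a
      by (simp add: left_diff_distrib mult.assoc)
    have "\<bar>Re (t - k0)\<bar> \<le> 1/2" "\<bar>Im (t - k0)\<bar> \<le> 1/2"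
      unfolding k0_def using of_int_round_abs_le[of "Re t"] of_int_round_abs_le[of "Im t"]
      by (simp_all add: abs_minus_commute)
    hence "(Re (t - k0))^2 \<le> (1/2)^2" "(Im (t - k0))^2 \<le> (1/2)^2"
      using abs_le_square_iff[of "Re (t - k0)" "1/2"] abs_le_square_iff[of "Im (t - k0)" "1/2"] by simp_all
    hence "(cmod (t - k0))^2 < 1^2" unfolding cmod_power2 by (simp add: power2_eq_square)
    hence "cmod (t - k0) < 1" by (rule power_less_imp_less_base) simp
    moreover have "x = q0 * (t - k0)" unfolding x_def t_def using q0(2) by (simp add: field_simps)
    ultimately have "cmod x < cmod q0" using q0(2) by (simp add: norm_mult)
    hence "x = 0" using q0minc[OF xL] by force
    hence qk: "q = k0 * q0" unfolding x_def by simp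
    have "gdvd k0 a" unfolding gdvd_def using q0w aq qk by (auto intro!: bexI[of _ "q0 * w"])
    moreover have "gdvd k0 q" unfolding gdvd_def using q0w qk by auto
    ultimately have "gdvd k0 1" using cop k0G unfolding gcoprime_def by blast
    then obtain c where "c \<in> gauss_ints" "1 = k0 * c" unfolding gdvd_def by blast
    hence "k0 \<in> set [1, -1, \<i>, -\<i>]" using G_unit k0G by metis
    thus ?thesis using pq qk aq by (auto intro!: bexI[of _ k0])
  qed
  hence "A \<subseteq> (\<lambda>k. (k * (q0 * w), k * q0)) ` set [1, -1, \<i>, -\<i>]" by blast
  hence "card A \<le> card ((\<lambda>k. (k * (q0 * w), k * q0)) ` set [1, -1, \<i>, -\<i>])"
    by (intro card_mono) auto
  also have "\<dots> \<le> card (set [1, -1, \<i>, -\<i>])" by (rule card_image_le) simp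
  also have "\<dots> \<le> 4" using card_length[of "[1, -1, \<i>, -\<i>::complex]"] by simp
  finally show ?thesis .
qed

lemma geom:
  fixes q y :: complex and \<rho> s :: real
  assumes q: "q \<noteq> 0" "cmod q \<le> s" and \<rho>: "0 < \<rho>" "\<rho> \<le> s"
    and y: "y \<in> cball (q - of_real (\<rho> / (2 * cmod q)) * q) (\<rho> / 2)"
  shows "cmod y \<le> s" "cmod (y - q) \<le> \<rho>"
proof -
  define c where "c = q - of_real (\<rho> / (2 * cmod q)) * q"
  have nq: "cmod q > 0" using q by simp
  have n1: "cmod (of_real (\<rho> / (2 * cmod q)) * q) = \<bar>\<rho> / (2 * cmod q)\<bar> * cmod q"
    by (simp only: norm_mult norm_of_real)
  have "\<bar>\<rho> / (2 * cmod q)\<bar> * cmod q = \<rho> / 2" using nq \<rho> by simp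
  moreover have "c - q = - (of_real (\<rho> / (2 * cmod q)) * q)" unfolding c_def by simp
  ultimately have cq: "cmod (c - q) = \<rho> / 2" using n1 by (metis norm_minus_cancel)
  have "c = of_real (1 - \<rho> / (2 * cmod q)) * q" unfolding c_def by (simp add: algebra_simps)
  hence "cmod c = \<bar>1 - \<rho> / (2 * cmod q)\<bar> * cmod q" by (simp only: norm_mult norm_of_real)
  also have "\<dots> = \<bar>(1 - \<rho> / (2 * cmod q)) * cmod q\<bar>" using nq by (simp add: abs_mult)
  also have "(1 - \<rho> / (2 * cmod q)) * cmod q = cmod q - \<rho> / 2" using nq by (simp add: field_simps)
  finally have cn: "cmod c = \<bar>cmod q - \<rho> / 2\<bar>" .
  have yc: "cmod (y - c) \<le> \<rho> / 2" using y unfolding c_def[symmetric] by (simp add: dist_norm norm_minus_commute)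
  have "cmod y \<le> cmod c + cmod (y - c)" by (metis add.commute diff_add_cancel norm_triangle_ineq)
  thus "cmod y \<le> s" using cn yc q \<rho>
  proof (cases "cmod q - \<rho> / 2 \<ge> 0")
    case True thus ?thesis using \<open>cmod y \<le> cmod c + cmod (y - c)\<close> cn yc q \<rho> by (simp add: abs_of_nonneg)
  next
    case False
    hence "cmod c = \<rho> / 2 - cmod q" using cn by simp
    thus ?thesis using \<open>cmod y \<le> cmod c + cmod (y - c)\<close> yc nq \<rho> by linarith
  qed
  have "cmod (y - q) \<le> cmod (y - c) + cmod (c - q)" by (metis diff_add_cancel norm_triangle_ineq add_diff_eq)
  thus "cmod (y - q) \<le> \<rho>" using cq yc by linarith
qed

lemma indicator_closed_integrable:
  assumes "closed C" "compact K"
  shows "(indicator C :: complex \<Rightarrow> real) integrable_on K"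
  using assms by (simp add: integrable_on_indicator lmeasurable_compact closed_Int_compact)

lemma card_integrable:
  fixes C :: "'b \<Rightarrow> complex set"
  assumes "finite A" "\<And>a. a \<in> A \<Longrightarrow> closed (C a)" "compact K"
  shows "(\<lambda>y. real (card {a\<in>A. y \<in> C a})) integrable_on K"
proof -
  have eq: "real (card {a\<in>A. y \<in> C a}) = (\<Sum>a\<in>A. indicator (C a) y)" for y
  proof -
    have "real (card {a\<in>A. y \<in> C a}) = (\<Sum>a\<in>{a\<in>A. y \<in> C a}. 1)" by simp
    also have "\<dots> = (\<Sum>a\<in>A. if y \<in> C a then 1 else 0)" by (rule sum.inter_filter[OF assms(1)])
    also have "\<dots> = (\<Sum>a\<in>A. indicator (C a) y)" by (rule sum.cong) (auto simp: indicator_def)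
    finally show ?thesis .
  qed
  show ?thesis unfolding eq
    by (intro integrable_sum assms(1) indicator_closed_integrable assms(2,3))
qed

lemma measure_cball_complex:
  assumes "r \<ge> 0"
  shows "measure lebesgue (cball (c::complex) r) = pi * r^2"
proof -
  have "measure lebesgue (cball c r) = measure lborel (cball c r)"
    by (rule measure_completion) simp
  also have "\<dots> = unit_ball_vol (real DIM(complex)) * r ^ DIM(complex)"
    by (rule content_cball[OF assms])
  finally show ?thesis by (simp add: unit_ball_vol_2)
qed

theorem lemma2:
  fixes Q :: nat and S :: "complex set" and \<Delta> \<tau> \<delta> :: real and b r z :: complex
  assumes S_sub: "S \<subseteq> cball 0 (sqrt (real Q)) \<inter> (gauss_ints - {0})"
    and \<Delta>_pos: "\<Delta> > 0"
    and \<tau>_def: "\<tau> = \<Delta> powr (-1/4)"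
    and b_int: "b \<in> gauss_ints" and r_int: "r \<in> gauss_ints"
    and br_coprime: "gcoprime b r"
    and r_pos: "0 < cmod r" and r_le: "cmod r \<le> \<tau>"
    and z_lower: "sqrt \<Delta> \<le> cmod z" and z_upper: "cmod z < 2 / (cmod r * \<tau>)"
    and \<delta>_pos: "\<delta> > 0"
    and \<delta>_lower: "sqrt (real Q) * sqrt \<Delta> / cmod z \<le> sqrt \<delta>"
    and \<delta>_upper: "sqrt \<delta> \<le> sqrt (real Q)"
  shows "real (Pcount S \<Delta> (b / r + z)) \<le>
    16 + 4 / (pi * \<delta>) * integral (cball 0 (sqrt (real Q))) (\<lambda>y. real (Pisum S b r z y \<delta>))"
proof -
  define G where "G = gauss_ints"
  define \<alpha> where "\<alpha> = b / r + z"
  define \<rho> where "\<rho> = sqrt \<delta>"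
  define R where "R = 2 * cmod (r * z) * \<rho>"
  define K where "K = cball (0::complex) (sqrt (real Q))"
  define I where "I = integral K (\<lambda>y. real (Pisum S b r z y \<delta>))"
  have r0: "r \<noteq> 0" using r_pos by auto
  have zpos: "cmod z > 0" using z_lower \<Delta>_pos by (smt (verit) real_sqrt_gt_zero)
  hence z0: "z \<noteq> 0" by auto
  have \<rho>pos: "\<rho> > 0" unfolding \<rho>_def using \<delta>_pos by simp
  have \<rho>Q: "\<rho> \<le> sqrt (real Q)" unfolding \<rho>_def using \<delta>_upper .
  have \<rho>sq: "\<rho>^2 = \<delta>" unfolding \<rho>_def using \<delta>_pos by simp
  have keyQ: "sqrt (real Q) * sqrt \<Delta> \<le> \<rho> * cmod z"
    using \<delta>_lower zpos unfolding \<rho>_def by (simp add: divide_le_eq)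
  have SG: "\<And>q. q \<in> S \<Longrightarrow> q \<in> G \<and> q \<noteq> 0 \<and> cmod q \<le> sqrt (real Q)"
    using S_sub unfolding G_def by auto
  have finS: "finite S"
    by (rule finite_subset[OF _ finite_G_cball[of 0 "sqrt (real Q)"]]) (use S_sub in auto)

  define T where "T = {(a, q). a \<in> gauss_ints \<and> q \<in> S \<and> gcoprime a q \<and> cmod (a / q - \<alpha>) \<le> sqrt \<Delta>}"
  have PT: "Pcount S \<Delta> (b / r + z) = card T" unfolding T_def Pcount_def \<alpha>_def by simp
  define T0 where "T0 = {p \<in> T. fst p * r - b * snd p = 0}"
  define T1 where "T1 = {p \<in> T. fst p * r - b * snd p \<noteq> 0}"
  have "T = T0 \<union> T1" unfolding T0_def T1_def by auto
  hence cT: "card T \<le> card T0 + card T1" by (metis card_Un_le)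
  have cT0: "card T0 \<le> 4"
  proof (rule card_T0[where w = "b / r"])
    show "T0 \<subseteq> {(a, q). a \<in> gauss_ints \<and> q \<in> gauss_ints \<and> q \<noteq> 0 \<and> gcoprime a q \<and> a = q * (b / r)}"
    proof
      fix p assume p: "p \<in> T0"
      obtain a q where pq: "p = (a, q)" by fastforce
      have h: "a \<in> gauss_ints" "q \<in> S" "gcoprime a q" "a * r = b * q"
        using p unfolding pq T0_def T_def by auto
      have "q \<in> gauss_ints" "q \<noteq> 0" using SG[OF h(2)] unfolding G_def by auto
      moreover have "a = q * (b / r)" using h(4) r0 by (simp add: field_simps)
      ultimately show "p \<in> {(a, q). a \<in> gauss_ints \<and> q \<in> gauss_ints \<and> q \<noteq> 0 \<and> gcoprime a q \<and> a = q * (b / r)}"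
        using h pq by auto
    qed
  qed

  define M where "M y q = {m \<in> gauss_ints \<inter> Jball r z y (sqrt \<delta>). gcong m (- b * q) r \<and> m \<noteq> 0}" for y q
  have finM: "finite (M y q)" for y q
    unfolding M_def Jball_def by (rule finite_subset[OF _ finite_G_cball]) blast
  have Pis: "Pisum S b r z y \<delta> = card (Sigma (S \<inter> cball y \<rho>) (M y))" for y
    unfolding Pisum_def M_def[symmetric] \<rho>_def
    by (rule card_SigmaI[symmetric]) (use finS finM in auto)

  define Rb where "Rb = cmod (r * z) * sqrt (real Q) + R"
  define F where "F q = {m \<in> gauss_ints \<inter> cball 0 Rb. gcong m (- b * q) r \<and> m \<noteq> 0}" for q
  define A where "A = Sigma S F"
  have finA: "finite A" unfolding A_def
    by (rule finite_SigmaI[OF finS]) (rule finite_subset[OF _ finite_G_cball[of 0 Rb]], auto simp: F_def)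
  define C where "C p = cball (fst p) \<rho> \<inter> {y. dist (r * z * y) (snd p) \<le> R}" for p :: "complex \<times> complex"
  have closedC: "closed (C p)" for p
    unfolding C_def by (intro closed_Int closed_cball closed_Collect_le continuous_intros)
  have SigEq: "Sigma (S \<inter> cball y \<rho>) (M y) = {p \<in> A. y \<in> C p}" if yK: "y \<in> K" for y
  proof (intro equalityI subsetI)
    fix p assume "p \<in> Sigma (S \<inter> cball y \<rho>) (M y)"
    then obtain q m where pq: "p = (q, m)" and q: "q \<in> S \<inter> cball y \<rho>" and m: "m \<in> M y q" by auto
    from m have mJ: "dist (r * z * y) m \<le> R" and mG: "m \<in> gauss_ints" "gcong m (- b * q) r" "m \<noteq> 0"
      unfolding M_def Jball_def R_def \<rho>_def by auto
    have "cmod m \<le> cmod (r * z * y) + R" using mJ norm_triangle_ineq2[of m "r*z*y"]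
      by (simp add: dist_norm norm_minus_commute)
    also have "cmod (r * z * y) \<le> cmod (r * z) * sqrt (real Q)"
      using yK unfolding K_def by (simp add: norm_mult mult_left_mono)
    finally have "cmod m \<le> Rb" unfolding Rb_def by simp
    hence "(q, m) \<in> A" using q mG unfolding A_def F_def by auto
    moreover have "y \<in> C (q, m)" using q mJ unfolding C_def by (auto simp: dist_commute)
    ultimately show "p \<in> {p \<in> A. y \<in> C p}" using pq by simp
  next
    fix p assume "p \<in> {p \<in> A. y \<in> C p}"
    then obtain q m where pq: "p = (q, m)" and h: "(q, m) \<in> A" "y \<in> C (q, m)" by (cases p) auto
    from h have "q \<in> S" "q \<in> cball y \<rho>" "m \<in> M y q"
      unfolding A_def F_def C_def M_def Jball_def R_def \<rho>_def by (auto simp: dist_commute)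
    thus "p \<in> Sigma (S \<inter> cball y \<rho>) (M y)" using pq by simp
  qed
  have PisK: "real (Pisum S b r z y \<delta>) = real (card {p \<in> A. y \<in> C p})" if "y \<in> K" for y
    using Pis SigEq[OF that] by simp
  have intPis: "(\<lambda>y. real (Pisum S b r z y \<delta>)) integrable_on K"
    by (rule integrable_eq[OF card_integrable[OF finA closedC]]) (use PisK K_def in auto)
  have Inn: "I \<ge> 0" unfolding I_def
    by (rule integral_nonneg[OF intPis]) simp

  have mainT1: "real (card T1) * (pi * \<delta> / 4) \<le> I"
  proof (cases "finite T1")
    case False thus ?thesis using Inn by simp
  next
    case True
    define cen where "cen q = q - of_real (\<rho> / (2 * cmod q)) * q" for q :: complex
    define D where "D q = cball (cen q) (\<rho> / 2)" for q
    have T1S: "snd p \<in> S" if "p \<in> T1" for p using that unfolding T1_def T_def by auto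
    have DK: "D q \<subseteq> K" and Dq: "\<And>y. y \<in> D q \<Longrightarrow> cmod (y - q) \<le> \<rho>" if "q \<in> S" for q
      using geom[of q "sqrt (real Q)" \<rho>] SG[OF that] \<rho>pos \<rho>Q unfolding D_def cen_def K_def by auto
    define f where "f y = (\<Sum>p\<in>T1. indicator (D (snd p)) y :: real)" for y
    have intD: "(indicator (D q) :: complex \<Rightarrow> real) integrable_on K" for q
      unfolding D_def K_def by (rule indicator_closed_integrable) auto
    have intDv: "integral K (indicator (D q) :: complex \<Rightarrow> real) = pi * \<delta> / 4" if "q \<in> S" for q
    proof -
      have "integral K (indicator (D q) :: complex \<Rightarrow> real) = integral K (\<lambda>x. if x \<in> D q then 1 else 0)"
        by (intro arg_cong[where f="integral K"] ext) (simp add: indicator_def)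
      also have "\<dots> = integral (D q \<inter> K) (\<lambda>x. 1)" by (rule integral_restrict_Int)
      also have "D q \<inter> K = D q" using DK[OF that] by auto
      also have "integral (D q) (\<lambda>x. 1) = measure lebesgue (D q)"
        by (rule lmeasure_integral[symmetric]) (simp add: D_def)
      also have "\<dots> = pi * (\<rho> / 2)^2" unfolding D_def by (rule measure_cball_complex) (use \<rho>pos in simp)
      also have "\<dots> = pi * \<delta> / 4" using \<rho>sq by (simp add: power_divide)
      finally show ?thesis .
    qed
    have intf: "integral K f = real (card T1) * (pi * \<delta> / 4)"
    proof -
      have "integral K f = (\<Sum>p\<in>T1. integral K (indicator (D (snd p)) :: complex \<Rightarrow> real))"
        unfolding f_def by (rule integral_sum[OF True]) (rule intD)
      also have "\<dots> = (\<Sum>p\<in>T1. pi * \<delta> / 4)" by (rule sum.cong) (auto simp: intDv T1S)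
      finally show ?thesis by simp
    qed
    have fint: "f integrable_on K" unfolding f_def by (rule integrable_sum[OF True]) (rule intD)
    have fle: "f y \<le> real (Pisum S b r z y \<delta>)" for y
    proof -
      have cle: "card ({p\<in>T1. y \<in> D (snd p)}) \<le> card (Sigma (S \<inter> cball y \<rho>) (M y))"
      proof (rule card_inj_on_le[where f = "\<lambda>(a, q). (q, a * r - b * q)"])
        show "inj_on (\<lambda>(a, q). (q, a * r - b * q)) ({p\<in>T1. y \<in> D (snd p)})"
          using r0 by (auto simp: inj_on_def)
        show "finite (Sigma (S \<inter> cball y \<rho>) (M y))" using finS finM by auto
        show "(\<lambda>(a, q). (q, a * r - b * q)) ` ({p\<in>T1. y \<in> D (snd p)}) \<subseteq> Sigma (S \<inter> cball y \<rho>) (M y)"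
        proof (rule image_subsetI)
          fix p assume pin: "p \<in> {p\<in>T1. y \<in> D (snd p)}"
          obtain a q where pq: "p = (a, q)" by fastforce
          from pin have p: "(a, q) \<in> T1" and yD: "y \<in> D q" using pq by auto
          from p have a: "a \<in> gauss_ints" and q: "q \<in> S" and ne: "a * r - b * q \<noteq> 0"
            and close: "cmod (a / q - \<alpha>) \<le> sqrt \<Delta>"
            unfolding T1_def T_def by auto
          have qq: "q \<in> G" "q \<noteq> 0" "cmod q \<le> sqrt (real Q)" using SG[OF q] by auto
          have yq: "cmod (y - q) \<le> \<rho>" using Dq[OF q] yD by simp
          have qc: "q \<in> cball y \<rho>" using yq by (simp add: dist_norm)
          have mG: "a * r - b * q \<in> gauss_ints"
            using a qq(1) r_int b_int G_diff G_mult unfolding G_def by blast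
          have cong: "gcong (a * r - b * q) (- b * q) r"
            unfolding gcong_def gdvd_def using a by (auto intro!: bexI[of _ a])
          have eq1: "a * r - b * q - r * z * q = q * r * (a / q - \<alpha>)"
            unfolding \<alpha>_def using qq(2) r0 by (simp add: field_simps)
          have "cmod (a * r - b * q - r * z * q) = cmod q * cmod r * cmod (a / q - \<alpha>)"
            unfolding eq1 by (simp add: norm_mult)
          also have "\<dots> \<le> cmod q * cmod r * sqrt \<Delta>"
            using close by (intro mult_left_mono) auto
          also have "\<dots> = cmod r * (cmod q * sqrt \<Delta>)" by simp
          also have "\<dots> \<le> cmod r * (\<rho> * cmod z)"
          proof (intro mult_left_mono)
            have "cmod q * sqrt \<Delta> \<le> sqrt (real Q) * sqrt \<Delta>" using qq(3) \<Delta>_pos by (intro mult_right_mono) auto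
            thus "cmod q * sqrt \<Delta> \<le> \<rho> * cmod z" using keyQ by linarith
          qed simp
          finally have d1: "cmod (a * r - b * q - r * z * q) \<le> cmod (r * z) * \<rho>" by (simp add: norm_mult mult_ac)
          have d2: "cmod (r * z * q - r * z * y) \<le> cmod (r * z) * \<rho>"
          proof -
            have "r * z * q - r * z * y = (r * z) * (q - y)" by (simp add: algebra_simps)
            hence "cmod (r * z * q - r * z * y) = cmod (r * z) * cmod (y - q)"
              by (simp add: norm_mult norm_minus_commute)
            moreover have "cmod (r * z) * cmod (y - q) \<le> cmod (r * z) * \<rho>"
              using yq by (rule mult_left_mono) simp
            ultimately show ?thesis by simp
          qed
          have "dist (r * z * y) (a * r - b * q) \<le> R"
          proof -
            have "dist (r * z * y) (a * r - b * q) = cmod (- ((a * r - b * q - r * z * q) + (r * z * q - r * z * y)))"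
              unfolding dist_norm by (rule arg_cong[where f=cmod]) (simp add: algebra_simps)
            also have "\<dots> = cmod ((a * r - b * q - r * z * q) + (r * z * q - r * z * y))"
              by (rule norm_minus_cancel)
            also have "\<dots> \<le> cmod (a * r - b * q - r * z * q) + cmod (r * z * q - r * z * y)"
              by (rule norm_triangle_ineq)
            also have "\<dots> \<le> cmod (r * z) * \<rho> + cmod (r * z) * \<rho>" using d1 d2 by (rule add_mono)
            also have "\<dots> = R" unfolding R_def by simp
            finally show ?thesis .
          qed
          hence "a * r - b * q \<in> M y q" unfolding M_def Jball_def R_def \<rho>_def
            using mG cong ne by (auto simp: \<rho>_def)
          thus "(\<lambda>(a, q). (q, a * r - b * q)) p \<in> Sigma (S \<inter> cball y \<rho>) (M y)"
            using pq q qc by simp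
        qed
      qed
      have "f y = (\<Sum>p\<in>T1. if y \<in> D (snd p) then 1 else 0)"
        unfolding f_def by (rule sum.cong) (auto simp: indicator_def)
      also have "\<dots> = (\<Sum>p\<in>{p\<in>T1. y \<in> D (snd p)}. 1)"
        by (rule sum.inter_filter[symmetric, OF True])
      also have "\<dots> = real (card {p\<in>T1. y \<in> D (snd p)})" by simp
      also have "\<dots> \<le> real (card (Sigma (S \<inter> cball y \<rho>) (M y)))" using cle by simp
      also have "\<dots> = real (Pisum S b r z y \<delta>)" using Pis by simp
      finally show ?thesis .
    qed
    have "integral K f \<le> I" unfolding I_def by (rule integral_le[OF fint intPis]) (rule fle)
    thus ?thesis using intf by simp
  qed
  have pd: "pi * \<delta> > 0" using \<delta>_pos by simp
  have "real (card T1) \<le> 4 / (pi * \<delta>) * I"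
  proof -
    have "real (card T1) * (pi * \<delta>) = 4 * (real (card T1) * (pi * \<delta> / 4))" by simp
    hence h: "real (card T1) * (pi * \<delta>) \<le> 4 * I" using mainT1 by linarith
    have "real (card T1) \<le> 4 * I / (pi * \<delta>)" using pos_le_divide_eq[OF pd] h by simp
    thus ?thesis by simp
  qed
  moreover have "real (card T) \<le> real (card T0) + real (card T1)" using cT by simp
  moreover have "real (card T0) \<le> 4" using cT0 by simp
  ultimately have "real (card T) \<le> 16 + 4 / (pi * \<delta>) * I" by linarith
  thus ?thesis unfolding PT I_def K_def by simp
qed

end
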